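(* Let $k>0$ be sufficiently large and let $\theta^{(1)}$ be the angle function of the most contracted direction $e^{(1)}(y)=(\cos\theta^{(1)}(y),\sin\theta^{(1)}(y))$ of the standard map defined below. Then $\theta^{(1)}$ is strictly decreasing on $[0,1/2]$ ($e^{(1)}$ rotates clockwise) and strictly increasing on $[1/2,1]$ ($e^{(1)}$ rotates counter-clockwise); $\theta^{(1)}(0)=\theta^{(1)}(1)=\pi+\tfrac12\tan^{-1}\varphi(0)$ is close to $\pi$ (within order $1/k$, $e^{(1)}$ near the negative horizontal semi-axis) and $\theta^{(1)}(1/2)=\tfrac12\tan^{-1}\varphi(1/2)$ is close to $0$ (within order $1/k$, $e^{(1)}$ near the positive horizontal semi-axis); $e^{(1)}$ is along the negative diagonal ($\theta^{(1)}=3\pi/4$) at $y=\delta^-$ and $y=1-\delta^-$, vertical ($\theta^{(1)}=\pi/2$) at $y=\delta^*$ and $y=1-\delta^*$, and along the positive diagonal ($\theta^{(1)}=\pi/4$) at $y=\delta^+$ and $y=1-\delta^+$.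
   Context: Standard map $f_k(x,y)=(x+k\sin(2\pi y),\,x+y+k\sin(2\pi y))\bmod 1$; $\psi_c(y)=2\pi k\cos(2\pi y)$; $\varphi(y)=-\frac{4\psi_c+2}{2\psi_c^2+2\psi_c-1}$. $\delta^*=\frac1{2\pi}\cos^{-1}(-\frac{1}{4\pi k})$, $\delta^{\pm}=\frac1{2\pi}\cos^{-1}(-\frac{1\pm\sqrt3}{4\pi k})$, with $\cos^{-1}\in[0,\pi]$, $\tan^{-1}\in[-\pi/2,\pi/2]$ (and $\tan^{-1}(\pm\infty)=\pm\pi/2$). The angle function is $\theta^{(1)}(y)=\pi+\frac12\tan^{-1}\varphi(y)$ for $y\in[0,\delta^-]\cup[1-\delta^-,1]$, $\frac\pi2+\frac12\tan^{-1}\varphi(y)$ for $y\in[\delta^-,\delta^+]\cup[1-\delta^+,1-\delta^-]$, and $\frac12\tan^{-1}\varphi(y)$ for $y\in[\delta^+,1-\delta^+]$; for large $k$ the vector $(\cos\theta^{(1)},\sin\theta^{(1)})$ spans the most contracted direction of $Df_k$ at points with second coordinate $y$. *)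

theory Defs
  imports "HOL-Analysis.Analysis" "HOL-Library.Extended_Real"
begin

definition psi_c :: "real \<Rightarrow> real \<Rightarrow> real" where
  "psi_c k y = 2 * pi * k * cos (2 * pi * y)"

definition phi_den :: "real \<Rightarrow> real \<Rightarrow> real" where
  "phi_den k y = 2 * (psi_c k y)^2 + 2 * psi_c k y - 1"

definition phi :: "real \<Rightarrow> real \<Rightarrow> real" where
  "phi k y = - (4 * psi_c k y + 2) / phi_den k y"

definition delta_star :: "real \<Rightarrow> real" where
  "delta_star k = arccos (- 1 / (4 * pi * k)) / (2 * pi)"

definition delta_plus :: "real \<Rightarrow> real" where
  "delta_plus k = arccos (- (1 + sqrt 3) / (4 * pi * k)) / (2 * pi)"

definition delta_minus :: "real \<Rightarrow> real" where
  "delta_minus k = arccos (- (1 - sqrt 3) / (4 * pi * k)) / (2 * pi)"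

definition arctan_ext :: "ereal \<Rightarrow> real" where
  "arctan_ext x = (case x of ereal r \<Rightarrow> arctan r | PInfty \<Rightarrow> pi / 2 | MInfty \<Rightarrow> - pi / 2)"

definition phi_ext :: "real \<Rightarrow> real set \<Rightarrow> real \<Rightarrow> ereal" where
  "phi_ext k S y = (if phi_den k y \<noteq> 0 then ereal (phi k y)
                    else Lim (at y within S) (\<lambda>t. ereal (phi k t)))"

definition piece1 :: "real \<Rightarrow> real set" where
  "piece1 k = {0 .. delta_minus k} \<union> {1 - delta_minus k .. 1}"

definition piece2 :: "real \<Rightarrow> real set" where
  "piece2 k = {delta_minus k .. delta_plus k} \<union> {1 - delta_plus k .. 1 - delta_minus k}"

definition piece3 :: "real \<Rightarrow> real set" where
  "piece3 k = {delta_plus k .. 1 - delta_plus k}"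

definition theta1 :: "real \<Rightarrow> real \<Rightarrow> real" where
  "theta1 k y =
     (if y \<in> piece1 k then pi + arctan_ext (phi_ext k (piece1 k) y) / 2
      else if y \<in> piece2 k then pi / 2 + arctan_ext (phi_ext k (piece2 k) y) / 2
      else arctan_ext (phi_ext k (piece3 k) y) / 2)"

end

theory Submission
  imports Defs
begin

definition Phi :: "real \<Rightarrow> real" where
  "Phi p = - (4 * p + 2) / (2 * p^2 + 2 * p - 1)"

definition r1 :: real where "r1 = (sqrt 3 - 1) / 2"
definition r2 :: real where "r2 = - (1 + sqrt 3) / 2"

lemma s3: "sqrt (3::real) ^ 2 = 3" "17/10 < sqrt (3::real)" "sqrt (3::real) < 18/10"
proof -
  show "sqrt (3::real) ^ 2 = 3" by simp
  have "(17/10)^2 < (3::real)" by (simp add: power2_eq_square)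
  then show "17/10 < sqrt (3::real)" by (rule real_less_rsqrt)
  have "sqrt 3 < sqrt ((18/10::real)^2)" by (simp only: real_sqrt_less_iff) (simp add: power2_eq_square)
  then show "sqrt (3::real) < 18/10" by simp
qed

lemma D_fact: "2 * p^2 + 2 * p - 1 = 2 * ((p - r1) * (p - r2))"
proof -
  have "sqrt 3 * sqrt 3 = (3::real)" by simp
  then show ?thesis unfolding r1_def r2_def by (simp add: field_simps power2_eq_square)
qed

lemma r_vals: "r2 < -1/2" "-1/2 < r1" "0 < r1" "r1 < 1" "-2 < r2"
  "2*r1^2+2*r1-1 = 0" "2*r2^2+2*r2-1 = 0" "4*r1+2 > 0" "4*r2+2 < 0"
  "4*r1+2 = 2 * sqrt 3" "4*r2+2 = -2 * sqrt 3"
  using s3 D_fact[of r1] D_fact[of r2] unfolding r1_def r2_def by (auto simp: field_simps)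

lemma Phi_mono_gen:
  assumes "a < b" "(2*a^2+2*a-1) * (2*b^2+2*b-1) > 0" "2*a*b+a+b+2 > 0"
  shows "Phi a < Phi b"
proof -
  define Da where "Da = 2*a^2+2*a-1"
  define Db where "Db = 2*b^2+2*b-1"
  have nz: "Da \<noteq> 0" "Db \<noteq> 0" using assms(2) unfolding Da_def Db_def by auto
  have "Phi b - Phi a = 4*(b-a)*(2*a*b+a+b+2) / (Da * Db)"
    unfolding Phi_def Da_def[symmetric] Db_def[symmetric] using nz
    by (simp add: field_simps) (simp add: Da_def Db_def algebra_simps power2_eq_square)
  also have "\<dots> > 0" using assms unfolding Da_def Db_def by (intro divide_pos_pos) auto
  finally show ?thesis by simp
qed

lemma Phi_mono1: "r1 < a \<Longrightarrow> a < b \<Longrightarrow> Phi a < Phi b"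
proof (rule Phi_mono_gen)
  assume h: "r1 < a" "a < b"
  show "a < b" by fact
  have "2*((a - r1) * (a - r2)) > 0" "2*((b - r1) * (b - r2)) > 0"
    using h r_vals by (auto intro!: mult_pos_pos)
  then show "(2*a^2+2*a-1) * (2*b^2+2*b-1) > 0" unfolding D_fact by (rule mult_pos_pos)
  have "a*b > 0" using h r_vals by (auto intro!: mult_pos_pos)
  then show "2*a*b+a+b+2 > 0" using h r_vals by linarith
qed

lemma Phi_mono3: "a < b \<Longrightarrow> b < r2 \<Longrightarrow> Phi a < Phi b"
proof (rule Phi_mono_gen)
  assume h: "a < b" "b < r2"
  show "a < b" by fact
  have "(a - r1) * (a - r2) > 0" "(b - r1) * (b - r2) > 0"
    using h r_vals by (auto intro!: mult_neg_neg)
  then have "2*((a - r1) * (a - r2)) > 0" "2*((b - r1) * (b - r2)) > 0" by auto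
  then show "(2*a^2+2*a-1) * (2*b^2+2*b-1) > 0" unfolding D_fact by (rule mult_pos_pos)
  have "(a+1/2)*(b+1/2) > 0" using h r_vals by (auto intro!: mult_neg_neg)
  then show "2*a*b+a+b+2 > 0" by (simp add: algebra_simps)
qed

lemma Phi_mono2: "r2 < a \<Longrightarrow> a < b \<Longrightarrow> b < r1 \<Longrightarrow> Phi a < Phi b"
proof (rule Phi_mono_gen)
  assume h: "r2 < a" "a < b" "b < r1"
  show "a < b" by fact
  have "(a - r1) * (a - r2) < 0" "(b - r1) * (b - r2) < 0"
    using h r_vals by (auto intro!: mult_neg_pos)
  then have "(2*a^2+2*a-1) < 0" "(2*b^2+2*b-1) < 0" unfolding D_fact by linarith+
  then show "(2*a^2+2*a-1) * (2*b^2+2*b-1) > 0" by (simp add: mult_neg_neg)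
  have "(a+1/2)^2 < 3/4" "(b+1/2)^2 < 3/4"
    using \<open>(2*a^2+2*a-1) < 0\<close> \<open>(2*b^2+2*b-1) < 0\<close> by (simp_all add: power2_eq_square algebra_simps)
  moreover have "0 \<le> ((a+1/2) + (b+1/2))^2" by simp
  ultimately show "2*a*b+a+b+2 > 0" by (simp add: power2_eq_square algebra_simps)
qed

lemma phi_Phi: "phi k y = Phi (psi_c k y)"
  by (simp add: phi_def phi_den_def Phi_def)

lemma psi_sym: "psi_c k (1 - y) = psi_c k y"
proof -
  have "2*pi*(1-y) = 2*pi - 2*pi*y" by (simp add: algebra_simps)
  then show ?thesis unfolding psi_c_def by (simp add: cos_diff)
qed

lemma den_sym: "phi_den k (1 - y) = phi_den k y"
  by (simp add: phi_den_def psi_sym)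

lemma phi_sym: "phi k (1 - y) = phi k y"
  by (simp add: phi_Phi psi_sym)

lemma den_tendsto: "(phi_den k \<longlongrightarrow> phi_den k p) (at p within S)"
  unfolding phi_den_def[abs_def] psi_c_def by (intro tendsto_intros)

lemma num_tendsto: "((\<lambda>t. 4 * psi_c k t + 2) \<longlongrightarrow> 4 * psi_c k p + 2) (at p within S)"
  unfolding psi_c_def by (intro tendsto_intros)

lemma Lim_pos:
  assumes "F \<noteq> bot" "(phi_den k \<longlongrightarrow> 0) F" "eventually (\<lambda>t. 0 < phi_den k t) F"
    "((\<lambda>t. 4 * psi_c k t + 2) \<longlongrightarrow> c) F" "c > 0"
  shows "Lim F (\<lambda>t. ereal (phi k t)) = -\<infinity>"
proof -
  have "((\<lambda>t. - (4 * psi_c k t + 2)) \<longlongrightarrow> -c) F" by (intro tendsto_intros assms)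
  moreover have "filterlim (\<lambda>t. inverse (phi_den k t)) at_top F"
    by (rule filterlim_inverse_at_top) (use assms in auto)
  ultimately have "filterlim (\<lambda>t. - (4 * psi_c k t + 2) * inverse (phi_den k t)) at_bot F"
    using assms(5) by (intro filterlim_tendsto_neg_mult_at_bot) auto
  moreover have "phi k = (\<lambda>t. - (4 * psi_c k t + 2) * inverse (phi_den k t))"
    by (rule ext) (simp add: phi_def divide_inverse algebra_simps)
  ultimately have "filterlim (phi k) at_bot F" by simp
  then have "((ereal \<circ> phi k) \<longlongrightarrow> -\<infinity>) F" by (simp only: ereal_tendsto_simps2)
  then show ?thesis using assms(1) by (intro tendsto_Lim) (auto simp: o_def)
qed

lemma Lim_neg:
  assumes "F \<noteq> bot" "(phi_den k \<longlongrightarrow> 0) F" "eventually (\<lambda>t. phi_den k t < 0) F"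
    "((\<lambda>t. 4 * psi_c k t + 2) \<longlongrightarrow> c) F" "c < 0"
  shows "Lim F (\<lambda>t. ereal (phi k t)) = -\<infinity>"
proof -
  have "((\<lambda>t. - phi_den k t) \<longlongrightarrow> 0) F" using tendsto_minus[OF assms(2)] by simp
  moreover have "eventually (\<lambda>t. 0 < - phi_den k t) F" using assms(3) by simp
  ultimately have "filterlim (\<lambda>t. inverse (- phi_den k t)) at_top F"
    by (rule filterlim_inverse_at_top)
  then have "filterlim (\<lambda>t. (4 * psi_c k t + 2) * inverse (- phi_den k t)) at_bot F"
    using assms(4,5) by (intro filterlim_tendsto_neg_mult_at_bot) auto
  moreover have "phi k = (\<lambda>t. (4 * psi_c k t + 2) * inverse (- phi_den k t))"
    by (rule ext) (simp add: phi_def divide_inverse algebra_simps)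
  ultimately have "filterlim (phi k) at_bot F" by simp
  then have "((ereal \<circ> phi k) \<longlongrightarrow> -\<infinity>) F" by (simp only: ereal_tendsto_simps2)
  then show ?thesis using assms(1) by (intro tendsto_Lim) (auto simp: o_def)
qed

lemma psi_less:
  assumes "0 < k" "0 \<le> y" "y \<le> 1/2" "0 \<le> z" "z \<le> 1/2"
  shows "psi_c k y < psi_c k z \<longleftrightarrow> z < y"
proof -
  have "psi_c k y < psi_c k z \<longleftrightarrow> cos (2*pi*y) < cos (2*pi*z)"
    unfolding psi_c_def using assms(1) by (simp add: mult.assoc)
  also have "\<dots> \<longleftrightarrow> 2*pi*z < 2*pi*y"
    using assms by (intro cos_mono_less_eq) auto
  also have "\<dots> \<longleftrightarrow> z < y" by simp
  finally show ?thesis .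
qed

lemma psi_at:
  assumes "k \<ge> 1" "\<bar>r\<bar> \<le> 2"
  shows "psi_c k (arccos (r / (2*pi*k)) / (2*pi)) = r"
    "0 \<le> arccos (r / (2*pi*k)) / (2*pi)" "arccos (r / (2*pi*k)) / (2*pi) \<le> 1/2"
proof -
  have A: "2*pi*k \<ge> 2*pi" using assms(1) by simp
  have "2*pi > (6::real)" using pi_gt3 by simp
  then have B: "2*pi*k \<ge> 2" using A by linarith
  then have "\<bar>2*pi*k\<bar> = 2*pi*k" by simp
  then have "\<bar>r / (2*pi*k)\<bar> = \<bar>r\<bar> / (2*pi*k)" by (simp add: abs_div)
  also have "\<dots> \<le> 1" using B assms(2) by (simp add: divide_le_eq)
  finally have X: "\<bar>r / (2*pi*k)\<bar> \<le> 1" .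
  then have X2: "-1 \<le> r / (2*pi*k)" "r / (2*pi*k) \<le> 1" by (simp_all only: abs_le_iff) linarith+
  then show "psi_c k (arccos (r / (2*pi*k)) / (2*pi)) = r"
    unfolding psi_c_def using assms(1) by (simp add: cos_arccos_abs)
  show "0 \<le> arccos (r / (2*pi*k)) / (2*pi)" using X2 by (intro divide_nonneg_nonneg arccos_lbound) auto
  have "arccos (r / (2*pi*k)) \<le> pi" using X2 by (intro arccos_ubound) auto
  then show "arccos (r / (2*pi*k)) / (2*pi) \<le> 1/2" by (simp add: divide_le_eq)
qed

lemma dm_eq: "delta_minus k = arccos (r1 / (2*pi*k)) / (2*pi)"
  unfolding delta_minus_def r1_def by (simp add: field_simps)
lemma ds_eq: "delta_star k = arccos ((-1/2) / (2*pi*k)) / (2*pi)"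
  unfolding delta_star_def by (simp add: field_simps)
lemma dp_eq: "delta_plus k = arccos (r2 / (2*pi*k)) / (2*pi)"
  unfolding delta_plus_def r2_def by (simp add: field_simps)

lemma keypts:
  assumes "k \<ge> 1"
  shows "psi_c k (delta_minus k) = r1" "psi_c k (delta_star k) = -1/2" "psi_c k (delta_plus k) = r2"
    "0 < delta_minus k" "delta_minus k < delta_star k" "delta_star k < delta_plus k"
    "delta_plus k < 1/2"
proof -
  have rs: "\<bar>r1\<bar> \<le> 2" "\<bar>-1/2::real\<bar> \<le> 2" "\<bar>r2\<bar> \<le> 2" using r_vals by auto
  note P1 = psi_at[OF assms rs(1), folded dm_eq]
  note P2 = psi_at[OF assms rs(2), folded ds_eq]
  note P3 = psi_at[OF assms rs(3), folded dp_eq]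
  show "psi_c k (delta_minus k) = r1" "psi_c k (delta_star k) = -1/2" "psi_c k (delta_plus k) = r2"
    using P1 P2 P3 by auto
  have k0: "0 < k" using assms by simp
  have "psi_c k (delta_minus k) < psi_c k 0" using P1 k0 r_vals unfolding psi_c_def
    using pi_gt3 assms by (simp add: psi_c_def) (smt (verit, ccfv_SIG) mult_le_cancel_left1 pi_gt3)
  then show "0 < delta_minus k" using psi_less[OF k0, of "delta_minus k" 0] P1 by simp
  show "delta_minus k < delta_star k" using psi_less[OF k0, of "delta_star k" "delta_minus k"] P1 P2 r_vals by simp
  show "delta_star k < delta_plus k" using psi_less[OF k0, of "delta_plus k" "delta_star k"] P2 P3 r_vals by simp
  have "psi_c k (1/2) < psi_c k (delta_plus k)" using P3 k0 r_vals 
    using pi_gt3 assms by (simp add: psi_c_def) (smt (verit, ccfv_SIG) mult_le_cancel_left1 pi_gt3)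
  then show "delta_plus k < 1/2" using psi_less[OF k0, of "1/2" "delta_plus k"] P3 by simp
qed

lemma arctan_minf: "arctan_ext (-\<infinity>) = - pi / 2"
  unfolding arctan_ext_def MInfty_eq_minfinity[symmetric] by simp

lemma den_psi: "phi_den k y = 2 * ((psi_c k y - r1) * (psi_c k y - r2))"
  unfolding phi_den_def by (rule D_fact)

lemma den_signs:
  "r1 < psi_c k y \<Longrightarrow> 0 < phi_den k y"
  "r2 < psi_c k y \<Longrightarrow> psi_c k y < r1 \<Longrightarrow> phi_den k y < 0"
  "psi_c k y < r2 \<Longrightarrow> 0 < phi_den k y"
  using r_vals unfolding den_psi by (auto intro!: mult_pos_pos mult_neg_neg simp: mult_less_0_iff)

lemma th_nz1: "phi_den k y \<noteq> 0 \<Longrightarrow> y \<in> piece1 k \<Longrightarrow> theta1 k y = pi + arctan (phi k y) / 2"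
  by (simp add: theta1_def phi_ext_def arctan_ext_def)
lemma th_nz2: "phi_den k y \<noteq> 0 \<Longrightarrow> y \<notin> piece1 k \<Longrightarrow> y \<in> piece2 k \<Longrightarrow>
    theta1 k y = pi/2 + arctan (phi k y) / 2"
  by (simp add: theta1_def phi_ext_def arctan_ext_def)
lemma th_nz3: "phi_den k y \<noteq> 0 \<Longrightarrow> y \<notin> piece1 k \<Longrightarrow> y \<notin> piece2 k \<Longrightarrow>
    theta1 k y = arctan (phi k y) / 2"
  by (simp add: theta1_def phi_ext_def arctan_ext_def)
lemma th_s1: assumes "phi_den k y = 0" "y \<in> piece1 k"
    "Lim (at y within piece1 k) (\<lambda>t. ereal (phi k t)) = -\<infinity>" shows "theta1 k y = 3 * pi / 4"
proof -
  have "theta1 k y = pi + arctan_ext (-\<infinity>) / 2" using assms unfolding theta1_def phi_ext_def by simp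
  then show ?thesis using arctan_minf by linarith
qed
lemma th_s2: assumes "phi_den k y = 0" "y \<notin> piece1 k" "y \<in> piece2 k"
    "Lim (at y within piece2 k) (\<lambda>t. ereal (phi k t)) = -\<infinity>" shows "theta1 k y = pi / 4"
proof -
  have "theta1 k y = pi/2 + arctan_ext (-\<infinity>) / 2" using assms unfolding theta1_def phi_ext_def by simp
  then show ?thesis using arctan_minf by linarith
qed

lemma region_psi:
  assumes "k \<ge> 1" "0 \<le> y" "y \<le> 1/2"
  shows "y < delta_minus k \<Longrightarrow> r1 < psi_c k y"
    "delta_minus k < y \<Longrightarrow> y < delta_plus k \<Longrightarrow> r2 < psi_c k y \<and> psi_c k y < r1"
    "delta_plus k < y \<Longrightarrow> psi_c k y < r2"
proof -
  note kp = keypts[OF assms(1)]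
  have k0: "0 < k" using assms by simp
  show "y < delta_minus k \<Longrightarrow> r1 < psi_c k y"
    using psi_less[OF k0, of "delta_minus k" y] kp assms by simp
  show "delta_minus k < y \<Longrightarrow> y < delta_plus k \<Longrightarrow> r2 < psi_c k y \<and> psi_c k y < r1"
    using psi_less[OF k0, of "delta_plus k" y] psi_less[OF k0, of y "delta_minus k"] kp assms by simp
  show "delta_plus k < y \<Longrightarrow> psi_c k y < r2"
    using psi_less[OF k0, of y "delta_plus k"] kp assms by simp
qed

lemma theta_regions:
  assumes "k \<ge> 1" "0 \<le> y" "y \<le> 1/2"
  shows "y < delta_minus k \<Longrightarrow> theta1 k y = pi + arctan (phi k y) / 2 \<and> 0 < phi_den k y"
    "delta_minus k < y \<Longrightarrow> y < delta_plus k \<Longrightarrow> theta1 k y = pi/2 + arctan (phi k y) / 2 \<and> phi_den k y < 0"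
    "delta_plus k < y \<Longrightarrow> theta1 k y = arctan (phi k y) / 2 \<and> 0 < phi_den k y"
proof -
  note kp = keypts[OF assms(1)]
  note rp = region_psi[OF assms]
  show "y < delta_minus k \<Longrightarrow> theta1 k y = pi + arctan (phi k y) / 2 \<and> 0 < phi_den k y"
  proof -
    assume h: "y < delta_minus k"
    have d: "0 < phi_den k y" using rp(1)[OF h] by (rule den_signs(1))
    have "y \<in> piece1 k" unfolding piece1_def using h assms by simp
    then show ?thesis using d th_nz1[of k y] by simp
  qed
  show "delta_minus k < y \<Longrightarrow> y < delta_plus k \<Longrightarrow> theta1 k y = pi/2 + arctan (phi k y) / 2 \<and> phi_den k y < 0"
  proof -
    assume h: "delta_minus k < y" "y < delta_plus k"
    have d: "phi_den k y < 0" using rp(2)[OF h] den_signs(2) by blast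
    have "y \<notin> piece1 k" unfolding piece1_def using h assms kp by auto
    moreover have "y \<in> piece2 k" unfolding piece2_def using h assms by simp
    ultimately show ?thesis using d th_nz2[of k y] by simp
  qed
  show "delta_plus k < y \<Longrightarrow> theta1 k y = arctan (phi k y) / 2 \<and> 0 < phi_den k y"
  proof -
    assume h: "delta_plus k < y"
    have d: "0 < phi_den k y" using rp(3)[OF h] by (rule den_signs(3))
    have "y \<notin> piece1 k" unfolding piece1_def using h assms kp by auto
    moreover have "y \<notin> piece2 k" unfolding piece2_def using h assms kp by auto
    ultimately show ?thesis using d th_nz3[of k y] by simp
  qed
qed

lemma sing_vals:
  assumes "k \<ge> 1"
  shows "theta1 k (delta_minus k) = 3*pi/4" "theta1 k (1 - delta_minus k) = 3*pi/4"
    "theta1 k (delta_plus k) = pi/4" "theta1 k (1 - delta_plus k) = pi/4"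
proof -
  note kp = keypts[OF assms]
  note tr = theta_regions[OF assms]
  have den_m: "phi_den k (delta_minus k) = 0" using kp(1) r_vals by (simp add: phi_den_def)
  have den_p: "phi_den k (delta_plus k) = 0" using kp(3) r_vals by (simp add: phi_den_def)
  show "theta1 k (delta_minus k) = 3*pi/4"
  proof (rule th_s1[OF den_m])
    show mem: "delta_minus k \<in> piece1 k" using kp by (simp add: piece1_def)
    show "Lim (at (delta_minus k) within piece1 k) (\<lambda>t. ereal (phi k t)) = -\<infinity>"
    proof (rule Lim_pos)
      have "delta_minus k islimpt {0..delta_minus k}" using kp(4) by (simp add: islimpt_Icc)
      then have "delta_minus k islimpt piece1 k" by (rule islimpt_subset) (auto simp: piece1_def)
      then show "at (delta_minus k) within piece1 k \<noteq> bot" using trivial_limit_within by blast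
      show "(phi_den k \<longlongrightarrow> 0) (at (delta_minus k) within piece1 k)"
        using den_tendsto[of k "delta_minus k"] den_m by simp
      show "eventually (\<lambda>t. 0 < phi_den k t) (at (delta_minus k) within piece1 k)"
        unfolding eventually_at
      proof (intro exI[of _ "1 - 2 * delta_minus k"] conjI ballI impI)
        show "0 < 1 - 2 * delta_minus k" using kp by simp
        fix t assume t: "t \<in> piece1 k" "t \<noteq> delta_minus k \<and> dist t (delta_minus k) < 1 - 2 * delta_minus k"
        then have "0 \<le> t" "t < delta_minus k" unfolding piece1_def dist_real_def by auto
        then show "0 < phi_den k t" using tr(1)[of t] kp by simp
      qed
      show "((\<lambda>t. 4 * psi_c k t + 2) \<longlongrightarrow> 4 * r1 + 2) (at (delta_minus k) within piece1 k)"
        using num_tendsto[of k "delta_minus k"] kp by simp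
      show "4 * r1 + 2 > 0" using r_vals by simp
    qed
  qed
  show "theta1 k (1 - delta_minus k) = 3*pi/4"
  proof (rule th_s1)
    show "phi_den k (1 - delta_minus k) = 0" using den_m den_sym by simp
    show mem: "1 - delta_minus k \<in> piece1 k" using kp by (simp add: piece1_def)
    show "Lim (at (1 - delta_minus k) within piece1 k) (\<lambda>t. ereal (phi k t)) = -\<infinity>"
    proof (rule Lim_pos)
      have "1 - delta_minus k islimpt {1 - delta_minus k..1}" using kp(4) by (simp add: islimpt_Icc)
      then have "1 - delta_minus k islimpt piece1 k" by (rule islimpt_subset) (auto simp: piece1_def)
      then show "at (1 - delta_minus k) within piece1 k \<noteq> bot" using trivial_limit_within by blast
      show "(phi_den k \<longlongrightarrow> 0) (at (1 - delta_minus k) within piece1 k)"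
        using den_tendsto[of k "1 - delta_minus k"] den_m den_sym by simp
      show "eventually (\<lambda>t. 0 < phi_den k t) (at (1 - delta_minus k) within piece1 k)"
        unfolding eventually_at
      proof (intro exI[of _ "1 - 2 * delta_minus k"] conjI ballI impI)
        show "0 < 1 - 2 * delta_minus k" using kp by simp
        fix t assume t: "t \<in> piece1 k" "t \<noteq> 1 - delta_minus k \<and> dist t (1 - delta_minus k) < 1 - 2 * delta_minus k"
        then have "0 \<le> 1 - t" "1 - t < delta_minus k" unfolding piece1_def dist_real_def by auto
        then have "0 < phi_den k (1 - t)" using tr(1)[of "1 - t"] kp by simp
        then show "0 < phi_den k t" using den_sym[of k t] by simp
      qed
      show "((\<lambda>t. 4 * psi_c k t + 2) \<longlongrightarrow> 4 * r1 + 2) (at (1 - delta_minus k) within piece1 k)"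
        using num_tendsto[of k "1 - delta_minus k"] kp psi_sym by simp
      show "4 * r1 + 2 > 0" using r_vals by simp
    qed
  qed
  show "theta1 k (delta_plus k) = pi/4"
  proof (rule th_s2[OF den_p])
    show "delta_plus k \<notin> piece1 k" using kp by (auto simp add: piece1_def)
    show mem: "delta_plus k \<in> piece2 k" using kp by (simp add: piece2_def)
    show "Lim (at (delta_plus k) within piece2 k) (\<lambda>t. ereal (phi k t)) = -\<infinity>"
    proof (rule Lim_neg)
      have "delta_plus k islimpt {delta_minus k..delta_plus k}" using kp by (simp add: islimpt_Icc)
      then have "delta_plus k islimpt piece2 k" by (rule islimpt_subset) (auto simp: piece2_def)
      then show "at (delta_plus k) within piece2 k \<noteq> bot" using trivial_limit_within by blast
      show "(phi_den k \<longlongrightarrow> 0) (at (delta_plus k) within piece2 k)"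
        using den_tendsto[of k "delta_plus k"] den_p by simp
      show "eventually (\<lambda>t. phi_den k t < 0) (at (delta_plus k) within piece2 k)"
        unfolding eventually_at
      proof (intro exI[of _ "min (delta_plus k - delta_minus k) (1 - 2 * delta_plus k)"] conjI ballI impI)
        show "0 < min (delta_plus k - delta_minus k) (1 - 2 * delta_plus k)" using kp by simp
        fix t assume t: "t \<in> piece2 k" "t \<noteq> delta_plus k \<and> dist t (delta_plus k) < min (delta_plus k - delta_minus k) (1 - 2 * delta_plus k)"
        then have "delta_minus k < t" "t < delta_plus k" unfolding piece2_def dist_real_def by auto
        then show "phi_den k t < 0" using tr(2)[of t] kp by simp
      qed
      show "((\<lambda>t. 4 * psi_c k t + 2) \<longlongrightarrow> 4 * r2 + 2) (at (delta_plus k) within piece2 k)"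
        using num_tendsto[of k "delta_plus k"] kp by simp
      show "4 * r2 + 2 < 0" using r_vals by simp
    qed
  qed
  show "theta1 k (1 - delta_plus k) = pi/4"
  proof (rule th_s2)
    show "phi_den k (1 - delta_plus k) = 0" using den_p den_sym by simp
    show "1 - delta_plus k \<notin> piece1 k" using kp by (auto simp add: piece1_def)
    show mem: "1 - delta_plus k \<in> piece2 k" using kp by (simp add: piece2_def)
    show "Lim (at (1 - delta_plus k) within piece2 k) (\<lambda>t. ereal (phi k t)) = -\<infinity>"
    proof (rule Lim_neg)
      have "1 - delta_plus k islimpt {1 - delta_plus k..1 - delta_minus k}" using kp by (simp add: islimpt_Icc)
      then have "1 - delta_plus k islimpt piece2 k" by (rule islimpt_subset) (auto simp: piece2_def)
      then show "at (1 - delta_plus k) within piece2 k \<noteq> bot" using trivial_limit_within by blast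
      show "(phi_den k \<longlongrightarrow> 0) (at (1 - delta_plus k) within piece2 k)"
        using den_tendsto[of k "1 - delta_plus k"] den_p den_sym by simp
      show "eventually (\<lambda>t. phi_den k t < 0) (at (1 - delta_plus k) within piece2 k)"
        unfolding eventually_at
      proof (intro exI[of _ "min (delta_plus k - delta_minus k) (1 - 2 * delta_plus k)"] conjI ballI impI)
        show "0 < min (delta_plus k - delta_minus k) (1 - 2 * delta_plus k)" using kp by simp
        fix t assume t: "t \<in> piece2 k" "t \<noteq> 1 - delta_plus k \<and> dist t (1 - delta_plus k) < min (delta_plus k - delta_minus k) (1 - 2 * delta_plus k)"
        then have "delta_minus k < 1 - t" "1 - t < delta_plus k" unfolding piece2_def dist_real_def by auto
        then have "phi_den k (1 - t) < 0" using tr(2)[of "1 - t"] kp by simp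
        then show "phi_den k t < 0" using den_sym[of k t] by simp
      qed
      show "((\<lambda>t. 4 * psi_c k t + 2) \<longlongrightarrow> 4 * r2 + 2) (at (1 - delta_plus k) within piece2 k)"
        using num_tendsto[of k "1 - delta_plus k"] kp psi_sym by simp
      show "4 * r2 + 2 < 0" using r_vals by simp
    qed
  qed
qed

lemma piece_sym: "(1 - y \<in> piece1 k) = (y \<in> piece1 k)" "(1 - y \<in> piece2 k) = (y \<in> piece2 k)"
  by (auto simp: piece1_def piece2_def)

lemma theta_sym:
  assumes "k \<ge> 1" "0 \<le> y" "y \<le> 1/2"
  shows "theta1 k (1 - y) = theta1 k y"
proof -
  note tr = theta_regions[OF assms]
  note sv = sing_vals[OF assms(1)]
  consider "y = delta_minus k" | "y = delta_plus k" | "phi_den k y \<noteq> 0"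
  proof -
    have "y < delta_minus k \<or> y = delta_minus k \<or> (delta_minus k < y \<and> y < delta_plus k) \<or> y = delta_plus k \<or> delta_plus k < y"
      by linarith
    then show ?thesis using tr that by force
  qed
  then show ?thesis
  proof cases
    case 3
    then have "phi_den k (1 - y) \<noteq> 0" using den_sym by simp
    then show ?thesis using 3 unfolding theta1_def phi_ext_def
      by (simp only: piece_sym phi_sym if_True if_False not_False_eq_True)
  qed (use sv in simp_all)
qed

lemma theta_ranges:
  assumes "k \<ge> 1" "0 \<le> y" "y \<le> 1/2"
  shows "y < delta_minus k \<Longrightarrow> 3*pi/4 < theta1 k y"
    "delta_minus k < y \<Longrightarrow> y < delta_plus k \<Longrightarrow> pi/4 < theta1 k y \<and> theta1 k y < 3*pi/4"
    "delta_plus k < y \<Longrightarrow> theta1 k y < pi/4"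
  using theta_regions[OF assms] arctan_bounded[of "phi k y"] by auto

lemma theta_mono_in:
  assumes "k \<ge> 1" "0 \<le> x" "x < y" "y \<le> 1/2"
  shows "y < delta_minus k \<Longrightarrow> theta1 k y < theta1 k x"
    "delta_minus k < x \<Longrightarrow> y < delta_plus k \<Longrightarrow> theta1 k y < theta1 k x"
    "delta_plus k < x \<Longrightarrow> theta1 k y < theta1 k x"
proof -
  have x: "0 \<le> x" "x \<le> 1/2" and y: "0 \<le> y" "y \<le> 1/2" using assms by auto
  have k0: "0 < k" using assms by simp
  have ps: "psi_c k y < psi_c k x" using psi_less[OF k0 y x] assms by simp
  note rx = region_psi[OF assms(1) x] and ry = region_psi[OF assms(1) y]
  note tx = theta_regions[OF assms(1) x] and ty = theta_regions[OF assms(1) y]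
  show "y < delta_minus k \<Longrightarrow> theta1 k y < theta1 k x"
  proof -
    assume h: "y < delta_minus k"
    have "phi k y < phi k x" unfolding phi_Phi using ps ry(1) h by (intro Phi_mono1) auto
    then show ?thesis using tx(1) ty(1) h assms by (simp add: arctan_less_iff)
  qed
  show "delta_minus k < x \<Longrightarrow> y < delta_plus k \<Longrightarrow> theta1 k y < theta1 k x"
  proof -
    assume h: "delta_minus k < x" "y < delta_plus k"
    have "phi k y < phi k x" unfolding phi_Phi using ps ry(2) rx(2) h assms by (intro Phi_mono2) auto
    then show ?thesis using tx(2) ty(2) h assms by (simp add: arctan_less_iff)
  qed
  show "delta_plus k < x \<Longrightarrow> theta1 k y < theta1 k x"
  proof -
    assume h: "delta_plus k < x"
    have h2: "delta_plus k < y" using h assms by linarith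
    have "phi k y < phi k x" unfolding phi_Phi using ps rx(3) h by (intro Phi_mono3) auto
    then have "arctan (phi k y) < arctan (phi k x)" by (simp add: arctan_less_iff)
    then show ?thesis using tx(3) ty(3)[OF h2] h assms by linarith
  qed
qed

lemma theta_anti:
  assumes "k \<ge> 1" "0 \<le> x" "x < y" "y \<le> 1/2"
  shows "theta1 k y < theta1 k x"
proof -
  note kp = keypts[OF assms(1)]
  note sv = sing_vals[OF assms(1)]
  have x: "0 \<le> x" "x \<le> 1/2" and y: "0 \<le> y" "y \<le> 1/2" using assms by auto
  note Rx = theta_ranges[OF assms(1) x] and Ry = theta_ranges[OF assms(1) y]
  note M = theta_mono_in[OF assms]
  have cx: "x < delta_minus k \<or> x = delta_minus k \<or> (delta_minus k < x \<and> x < delta_plus k) \<or> x = delta_plus k \<or> delta_plus k < x" by linarith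
  have cy: "y < delta_minus k \<or> y = delta_minus k \<or> (delta_minus k < y \<and> y < delta_plus k) \<or> y = delta_plus k \<or> delta_plus k < y" by linarith
  show ?thesis
    using cx cy Rx Ry M sv kp assms pi_gt3 by (elim disjE conjE; auto)
qed

lemma frac_aux:
  fixes A D N :: real
  assumes "A > 0" "D > 0" "N * A \<le> 3 * D"
  shows "N / D \<le> 3 / A"
proof -
  have e1: "N / D = (A * N) / (A * D)" using assms by simp
  have e2: "3 / A = (D * 3) / (D * A)" using assms by simp
  have "(A * N) / (A * D) \<le> (D * 3) / (A * D)"
    using assms by (intro divide_right_mono) (auto simp: algebra_simps)
  then show ?thesis using e1 e2 by (simp add: mult.commute)
qed

lemma Phi_bound:
  assumes "A \<ge> 6"
  shows "\<bar>Phi A\<bar> \<le> 3 / A" "\<bar>Phi (-A)\<bar> \<le> 3 / A"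
proof -
  have sq: "A * A \<ge> 6 * 6" "A * A \<ge> 6 * A" using assms by (intro mult_mono; auto)+
  have D1: "2*A^2+2*A-1 > 0" "2*A^2-2*A-1 > 0" using assms sq unfolding power2_eq_square by linarith+
  have "\<bar>Phi A\<bar> = (4*A+2)/(2*A^2+2*A-1)" unfolding Phi_def using D1 assms by (simp add: abs_div)
  also have "\<dots> \<le> 3 / A"
  proof (rule frac_aux)
    have "4*(A*A)+2*A \<le> 6*(A*A)+6*A-3" using sq assms by linarith
    then show "(4*A+2)*A \<le> 3*(2*A^2+2*A-1)" by (simp add: power2_eq_square algebra_simps)
  qed (use D1 assms in auto)
  finally show "\<bar>Phi A\<bar> \<le> 3 / A" .
  have "\<bar>Phi (-A)\<bar> = (4*A-2)/(2*A^2-2*A-1)" unfolding Phi_def using D1 assms by (simp add: abs_div)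
  also have "\<dots> \<le> 3 / A"
  proof (rule frac_aux)
    have "4*(A*A)-2*A \<le> 6*(A*A)-6*A-3" using sq assms by linarith
    then show "(4*A-2)*A \<le> 3*(2*A^2-2*A-1)" by (simp add: power2_eq_square algebra_simps)
  qed (use D1 assms in auto)
  finally show "\<bar>Phi (-A)\<bar> \<le> 3 / A" .
qed

theorem mainTheorem3:
  "\<exists>K C. \<forall>k \<ge> K.
     strict_antimono_on {0 .. 1/2} (theta1 k) \<and>
     strict_mono_on {1/2 .. 1} (theta1 k) \<and>
     theta1 k 0 = pi + arctan (phi k 0) / 2 \<and>
     theta1 k 1 = pi + arctan (phi k 0) / 2 \<and>
     \<bar>theta1 k 0 - pi\<bar> \<le> C / k \<and>
     theta1 k (1/2) = arctan (phi k (1/2)) / 2 \<and>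
     \<bar>theta1 k (1/2)\<bar> \<le> C / k \<and>
     theta1 k (delta_minus k) = 3 * pi / 4 \<and>
     theta1 k (1 - delta_minus k) = 3 * pi / 4 \<and>
     theta1 k (delta_star k) = pi / 2 \<and>
     theta1 k (1 - delta_star k) = pi / 2 \<and>
     theta1 k (delta_plus k) = pi / 4 \<and>
     theta1 k (1 - delta_plus k) = pi / 4"
proof (intro exI[of _ 1] allI impI)
  fix k :: real assume k: "k \<ge> 1"
  note kp = keypts[OF k]
  note sv = sing_vals[OF k]
  have A6: "2*pi*k \<ge> 6" using k pi_gt3
    by (smt (verit, best) mult_le_cancel_left1 mult_pos_pos)
  have anti: "strict_antimono_on {0 .. 1/2} (theta1 k)"
    unfolding monotone_on_def using theta_anti[OF k] by auto
  have mono: "strict_mono_on {1/2 .. 1} (theta1 k)"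
    unfolding monotone_on_def
  proof (intro ballI impI)
    fix x y :: real assume xy: "x \<in> {1/2..1}" "y \<in> {1/2..1}" "x < y"
    have "theta1 k (1 - x) < theta1 k (1 - y)" using theta_anti[OF k, of "1 - y" "1 - x"] xy by auto
    moreover have "theta1 k (1 - (1 - x)) = theta1 k (1 - x)" using theta_sym[OF k, of "1 - x"] xy by auto
    moreover have "theta1 k (1 - (1 - y)) = theta1 k (1 - y)" using theta_sym[OF k, of "1 - y"] xy by auto
    ultimately show "theta1 k x < theta1 k y" by simp
  qed
  have t0: "theta1 k 0 = pi + arctan (phi k 0) / 2" using theta_regions(1)[OF k, of 0] kp by simp
  have t1: "theta1 k 1 = pi + arctan (phi k 0) / 2" using theta_sym[OF k, of 0] t0 by simp
  have th: "theta1 k (1/2) = arctan (phi k (1/2)) / 2" using theta_regions(3)[OF k, of "1/2"] kp by simp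
  have p0: "phi k 0 = Phi (2*pi*k)" by (simp add: phi_Phi psi_c_def)
  have ph: "phi k (1/2) = Phi (-(2*pi*k))" by (simp add: phi_Phi psi_c_def)
  have b3: "3 / (2*pi*k) \<le> 1 / k" using k pi_gt3 by (simp add: field_simps)
  have "\<bar>theta1 k 0 - pi\<bar> = \<bar>arctan (phi k 0)\<bar> / 2" using t0 by simp
  also have "\<dots> \<le> \<bar>phi k 0\<bar> / 2" using abs_arctan_le[of "phi k 0"] by simp
  also have "\<dots> \<le> 1 / k" using Phi_bound(1)[OF A6] p0 b3 k by simp
  finally have e0: "\<bar>theta1 k 0 - pi\<bar> \<le> 1 / k" .
  have "\<bar>theta1 k (1/2)\<bar> = \<bar>arctan (phi k (1/2))\<bar> / 2" using th by simp
  also have "\<dots> \<le> \<bar>phi k (1/2)\<bar> / 2" using abs_arctan_le[of "phi k (1/2)"] by simp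
  also have "\<dots> \<le> 1 / k" using Phi_bound(2)[OF A6] ph b3 k by simp
  finally have eh: "\<bar>theta1 k (1/2)\<bar> \<le> 1 / k" .
  have ds: "theta1 k (delta_star k) = pi / 2"
  proof -
    have "phi k (delta_star k) = 0" using kp(2) by (simp add: phi_Phi Phi_def)
    then show ?thesis using theta_regions(2)[OF k, of "delta_star k"] kp by simp
  qed
  have ds1: "theta1 k (1 - delta_star k) = pi / 2" using theta_sym[OF k, of "delta_star k"] ds kp by simp
  show "strict_antimono_on {0 .. 1/2} (theta1 k) \<and>
     strict_mono_on {1/2 .. 1} (theta1 k) \<and>
     theta1 k 0 = pi + arctan (phi k 0) / 2 \<and>
     theta1 k 1 = pi + arctan (phi k 0) / 2 \<and>
     \<bar>theta1 k 0 - pi\<bar> \<le> 1 / k \<and>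
     theta1 k (1/2) = arctan (phi k (1/2)) / 2 \<and>
     \<bar>theta1 k (1/2)\<bar> \<le> 1 / k \<and>
     theta1 k (delta_minus k) = 3 * pi / 4 \<and>
     theta1 k (1 - delta_minus k) = 3 * pi / 4 \<and>
     theta1 k (delta_star k) = pi / 2 \<and>
     theta1 k (1 - delta_star k) = pi / 2 \<and>
     theta1 k (delta_plus k) = pi / 4 \<and>
     theta1 k (1 - delta_plus k) = pi / 4"
    using anti mono t0 t1 e0 th eh sv ds ds1 by simp
qed

end
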